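(* For every $1\le i\le n$ and every $v\in V$, the following identity holds in $H_\zeta'(\mathfrak{sp}_{2n})$: \[ \sum_{j=1}^{2n}\sum_{e\in B}\left\{\frac{\partial\mathcal{Q}_i}{\partial e},v\right\}e(v_j)\,v_j^*=0. \]
   Context: Let $V=\mathbb{C}^{2n}$ with basis $v_1,\dots,v_{2n}$ and symplectic form $\omega(x,y)=x^TJy$, where $J$ is block diagonal with $n$ blocks $\begin{pmatrix}0&1\\-1&0\end{pmatrix}$; $\mathfrak{sp}_{2n}=\{A:A^TJ+JA=0\}$ acting on $V$. Let $v_1^*,\dots,v_{2n}^*$ be the basis with $\omega(v_i,v_j^* )=\delta_{ij}$. Identify $S(\mathfrak{sp}_{2n})$ with polynomial functions of $A\in\mathfrak{sp}_{2n}$ via the trace form. $B$ is a basis of $\mathfrak{sp}_{2n}$; for $F\in S(\mathfrak{sp}_{2n})$ written as a polynomial in the elements of $B$, $\partial F/\partial e$ ($e\in B$) denotes the partial derivative with respect to $e$. For $j\ge0$ let $\mathfrak{r}_j(x,y)\in S(\mathfrak{sp}_{2n})$ be the coefficient of $z^j$ in $\omega(x,(1-z^2A^2)^{-1}y)\det(1-zA)^{-1}$; for $\zeta_0,\zeta_2,\dots,\zeta_{2k}\in\mathbb{C}$, $H_\zeta'(\mathfrak{sp}_{2n})$ is the commutative algebra $S(\mathfrak{sp}_{2n})\otimes S(V)$ with the Poisson bracket determined by $\{a,b\}=[a,b]$ ($a,b\in\mathfrak{sp}_{2n}$), $\{g,v\}=g(v)$ ($g\in\mathfrak{sp}_{2n}$,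 $v\in V$), $\{x,y\}=\sum_j\zeta_{2j}\mathfrak{r}_{2j}(x,y)$ ($x,y\in V$). Define $\mathcal{Q}_i\in S(\mathfrak{sp}_{2n})$ by $\sum_{i=0}^n\mathcal{Q}_iz^{2i}=\det(1-zA)$. *)

theory Defs
  imports Complex_Main "Jordan_Normal_Form.Determinant"
    "HOL-Computational_Algebra.Polynomial_FPS"
begin

text \<open>V = C^(2n) as complex vectors of dimension 2n; matrices are JNF matrices.
  Indices are 0-based: v_j is unit_vec (2n) j for j < 2n.\<close>

definition mtrace :: "complex mat \<Rightarrow> complex" where
  "mtrace A = (\<Sum>k<dim_row A. A $$ (k, k))"

text \<open>J: block diagonal with n blocks [[0,1],[-1,0]].\<close>
definition Jmat :: "nat \<Rightarrow> complex mat" where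
  "Jmat n = mat (2*n) (2*n) (\<lambda>(r, s).
     if even r \<and> s = r + 1 then 1 else if odd r \<and> s + 1 = r then -1 else 0)"

definition omega :: "nat \<Rightarrow> complex vec \<Rightarrow> complex vec \<Rightarrow> complex" where
  "omega n x y = scalar_prod x (Jmat n *\<^sub>v y)"

definition sp :: "nat \<Rightarrow> complex mat set" where
  "sp n = {A. A \<in> carrier_mat (2*n) (2*n) \<and>
              transpose_mat A * Jmat n + Jmat n * A = 0\<^sub>m (2*n) (2*n)}"

definition vstar :: "nat \<Rightarrow> nat \<Rightarrow> complex vec" where
  "vstar n j = (SOME u. u \<in> carrier_vec (2*n) \<and>
       (\<forall>i<2*n. omega n (unit_vec (2*n) i) u = (if i = j then 1 else 0)))"

definition lincomb_mats :: "nat \<Rightarrow> complex mat list \<Rightarrow> (nat \<Rightarrow> complex) \<Rightarrow> complex mat" where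
  "lincomb_mats n B c = mat (2*n) (2*n) (\<lambda>rs. \<Sum>l<length B. c l * (B ! l) $$ rs)"

definition is_sp_basis :: "nat \<Rightarrow> complex mat list \<Rightarrow> bool" where
  "is_sp_basis n B \<longleftrightarrow> set B \<subseteq> sp n \<and>
     (\<forall>X\<in>sp n. \<exists>c. X = lincomb_mats n B c) \<and>
     (\<forall>c. lincomb_mats n B c = 0\<^sub>m (2*n) (2*n) \<longrightarrow> (\<forall>l<length B. c l = 0))"

text \<open>S(sp) (x) S(V) is realised as polynomial functions on sp x V^*; V^* is identified
  with V via omega.  An element is a function of (A, w) with A in sp, w in C^(2n).
  A basis element e of sp is the function A |-> tr(e A) (trace form); a vector x in V is the
  function w |-> omega(x, w).  Equality in H' means equality on sp x C^(2n).\<close>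

type_synonym Hfun = "complex mat \<Rightarrow> complex vec \<Rightarrow> complex"

definition genSp :: "complex mat \<Rightarrow> Hfun" where
  "genSp e = (\<lambda>A w. mtrace (e * A))"

definition genV :: "nat \<Rightarrow> complex vec \<Rightarrow> Hfun" where
  "genV n x = (\<lambda>A w. omega n x w)"

definition dualB :: "nat \<Rightarrow> complex mat list \<Rightarrow> nat \<Rightarrow> complex mat" where
  "dualB n B l = (SOME X. X \<in> sp n \<and>
      (\<forall>l'<length B. mtrace ((B ! l') * X) = (if l' = l then 1 else 0)))"

text \<open>Generators of H': the basis elements B!l of sp and the basis vectors v_k of V.\<close>
datatype gen = GS nat | GV nat

definition gens :: "nat \<Rightarrow> complex mat list \<Rightarrow> gen set" where
  "gens n B = GS ` {..<length B} \<union> GV ` {..<2*n}"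

text \<open>Partial derivative with respect to a generator (the generators being coordinates).\<close>
definition deriv0 :: "(complex \<Rightarrow> complex) \<Rightarrow> complex" where
  "deriv0 f = (SOME D. (f has_field_derivative D) (at 0))"

fun pd :: "nat \<Rightarrow> complex mat list \<Rightarrow> gen \<Rightarrow> Hfun \<Rightarrow> Hfun" where
  "pd n B (GS l) F = (\<lambda>A w. deriv0 (\<lambda>t. F (A + t \<cdot>\<^sub>m dualB n B l) w))"
| "pd n B (GV k) F = (\<lambda>A w. deriv0 (\<lambda>t. F A (w + t \<cdot>\<^sub>v vstar n k)))"

definition detpoly :: "nat \<Rightarrow> complex mat \<Rightarrow> complex poly" where
  "detpoly n A = det (1\<^sub>m (2*n) - map_mat (\<lambda>a. [:0, a:]) A)"

definition Qf :: "nat \<Rightarrow> nat \<Rightarrow> Hfun" where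
  "Qf n i = (\<lambda>A w. coeff (detpoly n A) (2*i))"

text \<open>r_j(x,y): coefficient of z^j in omega(x,(1-z^2A^2)^(-1) y) det(1-zA)^(-1).\<close>
definition rr :: "nat \<Rightarrow> nat \<Rightarrow> complex vec \<Rightarrow> complex vec \<Rightarrow> Hfun" where
  "rr n j x y = (\<lambda>A w. fps_nth
      (Abs_fps (\<lambda>k. if even k then omega n x ((A ^\<^sub>m k) *\<^sub>v y) else 0)
       * inverse (fps_of_poly (detpoly n A))) j)"

text \<open>Brackets of generators; zeta_0, zeta_2, ..., zeta_2K are zeta 0, ..., zeta K.\<close>
fun brgen :: "nat \<Rightarrow> complex mat list \<Rightarrow> (nat \<Rightarrow> complex) \<Rightarrow> nat \<Rightarrow> gen \<Rightarrow> gen \<Rightarrow> Hfun" where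
  "brgen n B \<zeta> K (GS a) (GS b) = genSp (B ! a * B ! b - B ! b * B ! a)"
| "brgen n B \<zeta> K (GS a) (GV k) = genV n (B ! a *\<^sub>v unit_vec (2*n) k)"
| "brgen n B \<zeta> K (GV k) (GS a) = (\<lambda>A w. - genV n (B ! a *\<^sub>v unit_vec (2*n) k) A w)"
| "brgen n B \<zeta> K (GV k) (GV k') =
     (\<lambda>A w. \<Sum>j\<le>K. \<zeta> j * rr n (2*j) (unit_vec (2*n) k) (unit_vec (2*n) k') A w)"

definition pbr :: "nat \<Rightarrow> complex mat list \<Rightarrow> (nat \<Rightarrow> complex) \<Rightarrow> nat \<Rightarrow> Hfun \<Rightarrow> Hfun \<Rightarrow> Hfun" where
  "pbr n B \<zeta> K F G = (\<lambda>A w. \<Sum>a\<in>gens n B. \<Sum>b\<in>gens n B.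
       pd n B a F A w * pd n B b G A w * brgen n B \<zeta> K a b A w)"

definition H_zero :: "nat \<Rightarrow> Hfun \<Rightarrow> bool" where
  "H_zero n F \<longleftrightarrow> (\<forall>A\<in>sp n. \<forall>w\<in>carrier_vec (2*n). F A w = 0)"

end

theory Submission
  imports Defs
begin

definition pix :: "nat \<Rightarrow> nat" where "pix r = (if even r then r+1 else r-1)"
definition eps :: "nat \<Rightarrow> complex" where "eps r = (if even r then 1 else -1)"

lemma pi_lt: "r < 2*n \<Longrightarrow> pix r < 2*n"
  unfolding pix_def by (cases "even r"; simp; presburger)
lemma pi_pi[simp]: "pix (pix r) = r"
  unfolding pix_def by (cases "even r"; simp; presburger)
lemma eps_pi[simp]: "eps (pix r) = - eps r"
  unfolding pix_def eps_def by (cases "even r"; simp; presburger)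
lemma eps_sq[simp]: "eps r * eps r = 1"
  unfolding eps_def by auto
lemma eps_nz[simp]: "eps r \<noteq> 0"
  unfolding eps_def by auto
lemma pi_neq: "pix r \<noteq> r"
  unfolding pix_def by (cases "even r"; simp; presburger)
lemma pi_inj: "pix a = pix b \<Longrightarrow> a = b"
  by (metis pi_pi)

lemma Jmat_carrier[simp]: "Jmat n \<in> carrier_mat (2*n) (2*n)"
  unfolding Jmat_def by auto

lemma Jmat_dims[simp]: "dim_row (Jmat n) = 2*n" "dim_col (Jmat n) = 2*n"
  unfolding Jmat_def by auto

lemma Jmat_idx: "r < 2*n \<Longrightarrow> s < 2*n \<Longrightarrow> Jmat n $$ (r,s) = (if s = pix r then eps r else 0)"
  unfolding Jmat_def pix_def eps_def by (cases "even r"; auto)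

lemma sum_single: "finite S \<Longrightarrow> c \<in> S \<Longrightarrow> (\<Sum>s\<in>S. (if s = c then f s else 0)) = f c"
  by simp

lemma omega_eq: assumes "x \<in> carrier_vec (2*n)" "y \<in> carrier_vec (2*n)"
  shows "omega n x y = (\<Sum>r<2*n. x$r * eps r * y$(pix r))"
proof -
  have "(Jmat n *\<^sub>v y) $ r = eps r * y $ (pix r)" if "r < 2*n" for r
  proof -
    have "(Jmat n *\<^sub>v y) $ r = (\<Sum>s\<in>{0..<2*n}. Jmat n $$ (r,s) * y $ s)"
      using that assms by (simp add: mult_mat_vec_def scalar_prod_def row_def)
    also have "\<dots> = (\<Sum>s\<in>{0..<2*n}. (if s = pix r then eps r * y $ s else 0))"
      by (rule sum.cong, auto simp: Jmat_idx that)
    also have "\<dots> = eps r * y $ (pix r)"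
      using pi_lt[OF that] by (subst sum_single, auto)
    finally show ?thesis .
  qed
  then show ?thesis using assms unfolding omega_def scalar_prod_def
    by (auto intro!: sum.cong simp: atLeast0LessThan)
qed

abbreviation "ev n x \<equiv> x \<in> carrier_vec (2*n)"

lemma if_times0[simp]: "(if P then a else 0) * (b::'a::mult_zero) = (if P then a*b else 0)"
  "b * (if P then a else 0) = (if P then b*a else 0)" by auto

lemma pi_eq_iff: "(s = pix i) = (i = pix s)" by (metis pi_pi)
lemma pi_eq_iff2: "(pix r = j) = (r = pix j)" by (metis pi_pi)

lemma omega_unit: "i < 2*n \<Longrightarrow> ev n y \<Longrightarrow> omega n (unit_vec (2*n) i) y = eps i * y $ (pix i)"
  by (simp add: omega_eq unit_vec_def if_distrib[where f="\<lambda>x. x * _"] cong: if_cong)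

lemma vstar_prop: assumes j: "j < 2*n"
  shows "vstar n j \<in> carrier_vec (2*n) \<and>
       (\<forall>i<2*n. omega n (unit_vec (2*n) i) (vstar n j) = (if i = j then 1 else 0))"
proof -
  let ?u = "vec (2*n) (\<lambda>c. if pix c = j then eps j else 0) :: complex vec"
  have "?u \<in> carrier_vec (2*n) \<and>
       (\<forall>i<2*n. omega n (unit_vec (2*n) i) ?u = (if i = j then 1 else 0))"
    by (auto simp: omega_unit pi_lt)
  then show ?thesis unfolding vstar_def by (rule someI)
qed

lemma vstar_carrier[simp]: "j < 2*n \<Longrightarrow> vstar n j \<in> carrier_vec (2*n)"
  using vstar_prop by blast

lemma vstar_idx: assumes "j < 2*n" "c < 2*n"
  shows "vstar n j $ c = (if pix c = j then eps j else 0)"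
proof -
  have "omega n (unit_vec (2*n) (pix c)) (vstar n j) = (if pix c = j then 1 else 0)"
    using vstar_prop[OF assms(1)] pi_lt[OF assms(2)] by blast
  then have "eps (pix c) * vstar n j $ c = (if pix c = j then 1 else 0)"
    using omega_unit[OF pi_lt[OF assms(2)], of "vstar n j"] assms by simp
  then have "eps (pix c) * (eps (pix c) * vstar n j $ c) = eps (pix c) * (if pix c = j then 1 else 0)"
    by simp
  then show ?thesis by (auto simp: mult.assoc[symmetric])
qed

lemma omega_vstar_right: assumes "j < 2*n" "ev n x"
  shows "omega n x (vstar n j) = x $ j"
proof -
  have "omega n x (vstar n j) = (\<Sum>r<2*n. (if r = j then x $ r else 0))"
    using assms by (auto simp: omega_eq vstar_idx pi_lt intro!: sum.cong)
  also have "\<dots> = x $ j" using assms by simp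
  finally show ?thesis .
qed

lemma omega_vstar_left: assumes "j < 2*n" "ev n x"
  shows "omega n (vstar n j) x = - x $ j"
proof -
  have "omega n (vstar n j) x = (\<Sum>r<2*n. (if r = pix j then - x $ j else 0))"
    using assms by (auto simp: omega_eq vstar_idx pi_lt pi_eq_iff2 intro!: sum.cong)
  also have "\<dots> = - x $ j" using assms pi_lt[OF assms(1)] by simp
  finally show ?thesis .
qed

lemma omega_lin_right: assumes "ev n x" "ev n y" "ev n u"
  shows "omega n x (y + t \<cdot>\<^sub>v u) = omega n x y + t * omega n x u"
proof -
  have "(y + t \<cdot>\<^sub>v u) $ pix r = y $ pix r + t * u $ pix r" if "r < 2*n" for r
    using assms pi_lt[OF that] by simp
  then show ?thesis
  using assms by (simp add: omega_eq sum_distrib_left sum.distrib[symmetric] distrib_left distrib_right mult.assoc mult.left_commute)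
qed

lemma mat_unit: fixes B :: "complex mat" assumes "B \<in> carrier_mat (2*n) (2*n)" "k < 2*n" "r < 2*n"
  shows "(B *\<^sub>v unit_vec (2*n) k) $ r = B $$ (r,k)"
  using assms by (simp add: scalar_prod_def unit_vec_def)

lemma omega_Bunit: fixes B :: "complex mat" assumes "B \<in> carrier_mat (2*n) (2*n)" "k < 2*n" "ev n w"
  shows "omega n (B *\<^sub>v unit_vec (2*n) k) w = (\<Sum>r<2*n. B $$ (r,k) * eps r * w $ pix r)"
  using assms by (simp add: omega_eq mat_unit)

lemma sp_iff: assumes X: "X \<in> carrier_mat (2*n) (2*n)"
  shows "X \<in> sp n \<longleftrightarrow> (\<forall>r<2*n. \<forall>s<2*n. eps s * X $$ (pix s, r) = eps r * X $$ (pix r, s))"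
proof -
  have e: "(transpose_mat X * Jmat n + Jmat n * X) $$ (r,s) = eps r * X $$ (pix r, s) - eps s * X $$ (pix s, r)"
    if "r < 2*n" "s < 2*n" for r s
  proof -
    have 1: "(transpose_mat X * Jmat n) $$ (r,s) = (\<Sum>k\<in>{0..<2*n}. (if k = pix s then - eps s * X $$ (pix s, r) else 0))"
      using X that by (auto simp: scalar_prod_def Jmat_idx pi_eq_iff[of s] intro!: sum.cong)
    have 2: "(Jmat n * X) $$ (r,s) = (\<Sum>k\<in>{0..<2*n}. (if k = pix r then eps r * X $$ (pix r, s) else 0))"
      using X that by (auto simp: scalar_prod_def Jmat_idx intro!: sum.cong)
    show ?thesis using X that 1 2 pi_lt[OF that(1)] pi_lt[OF that(2)] by simp
  qed
  have "X \<in> sp n \<longleftrightarrow> (\<forall>r<2*n. \<forall>s<2*n. (transpose_mat X * Jmat n + Jmat n * X) $$ (r,s) = 0)"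
  proof
    assume "X \<in> sp n"
    then have eq: "transpose_mat X * Jmat n + Jmat n * X = 0\<^sub>m (2*n) (2*n)" unfolding sp_def by auto
    show "\<forall>r<2*n. \<forall>s<2*n. (transpose_mat X * Jmat n + Jmat n * X) $$ (r,s) = 0"
      by (simp only: eq, simp)
  next
    assume h: "\<forall>r<2*n. \<forall>s<2*n. (transpose_mat X * Jmat n + Jmat n * X) $$ (r,s) = 0"
    have "transpose_mat X * Jmat n + Jmat n * X = 0\<^sub>m (2*n) (2*n)"
      apply (rule eq_matI) using h X by auto
    then show "X \<in> sp n" unfolding sp_def using X by auto
  qed
  then show ?thesis using e by (auto simp: right_minus_eq)
qed

definition tp :: "nat \<Rightarrow> complex mat \<Rightarrow> complex mat \<Rightarrow> complex" where
  "tp n X Y = (\<Sum>x<2*n. \<Sum>y<2*n. X $$ (x,y) * Y $$ (y,x))"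

lemma mtrace_tp: "X \<in> carrier_mat (2*n) (2*n) \<Longrightarrow> Y \<in> carrier_mat (2*n) (2*n) \<Longrightarrow>
   mtrace (X * Y) = tp n X Y"
  unfolding mtrace_def tp_def by (auto simp: scalar_prod_def atLeast0LessThan intro!: sum.cong)

lemma sp_carrier: "X \<in> sp n \<Longrightarrow> X \<in> carrier_mat (2*n) (2*n)"
  unfolding sp_def by auto

lemma sp_cond: "X \<in> sp n \<Longrightarrow> r < 2*n \<Longrightarrow> s < 2*n \<Longrightarrow> eps s * X $$ (pix s, r) = eps r * X $$ (pix r, s)"
  using sp_iff sp_carrier by blast

lemma sp_lin: assumes "\<And>a. a \<in> S \<Longrightarrow> M a \<in> sp n" and "X \<in> sp n"
  shows "mat (2*n) (2*n) (\<lambda>rs. (\<Sum>a\<in>S. c a * M a $$ rs) - d * X $$ rs) \<in> sp n"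
proof -
  have "eps s * ((\<Sum>a\<in>S. c a * M a $$ (pix s, r)) - d * X $$ (pix s, r)) =
        eps r * ((\<Sum>a\<in>S. c a * M a $$ (pix r, s)) - d * X $$ (pix r, s))"
    if "r < 2*n" "s < 2*n" for r s
  proof -
    have "eps s * ((\<Sum>a\<in>S. c a * M a $$ (pix s, r)) - d * X $$ (pix s, r)) =
       (\<Sum>a\<in>S. c a * (eps s * M a $$ (pix s, r))) - d * (eps s * X $$ (pix s, r))"
      by (simp add: sum_distrib_left right_diff_distrib mult.left_commute)
    also have "\<dots> = (\<Sum>a\<in>S. c a * (eps r * M a $$ (pix r, s))) - d * (eps r * X $$ (pix r, s))"
    proof -
      have "\<forall>a\<in>S. eps s * M a $$ (pix s, r) = eps r * M a $$ (pix r, s)"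
        using sp_cond assms(1) that by blast
      then show ?thesis using sp_cond[OF \<open>X \<in> sp n\<close> that] by (auto intro!: sum.cong)
    qed
    also have "\<dots> = eps r * ((\<Sum>a\<in>S. c a * M a $$ (pix r, s)) - d * X $$ (pix r, s))"
      by (simp add: sum_distrib_left right_diff_distrib mult.left_commute)
    finally show ?thesis .
  qed
  then show ?thesis by (subst sp_iff) (auto simp: pi_lt)
qed

lemma zero_sp: "0\<^sub>m (2*n) (2*n) \<in> sp n"
  by (subst sp_iff) (auto simp: pi_lt)

lemma sp_lin0: assumes "\<And>a. a \<in> S \<Longrightarrow> M a \<in> sp n"
  shows "mat (2*n) (2*n) (\<lambda>rs. (\<Sum>a\<in>S. c a * M a $$ rs)) \<in> sp n"
  using sp_lin[OF assms zero_sp, where c=c and d=0] by simp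

lemma cnj_eps[simp]: "cnj (eps r) = eps r" unfolding eps_def by auto

lemma sp_ct: assumes X: "X \<in> sp n"
  shows "mat (2*n) (2*n) (\<lambda>(r,s). cnj (X $$ (s,r))) \<in> sp n"
proof -
  have "eps s * cnj (X $$ (r, pix s)) = eps r * cnj (X $$ (s, pix r))" if "r < 2*n" "s < 2*n" for r s
  proof -
    have "eps (pix r) * X $$ (pix (pix r), pix s) = eps (pix s) * X $$ (pix (pix s), pix r)"
      using sp_cond[OF X pi_lt[OF that(2)] pi_lt[OF that(1)]] .
    then have "eps r * X $$ (r, pix s) = eps s * X $$ (s, pix r)" by simp
    then have E: "eps r * eps s * (eps r * X $$ (r, pix s)) = eps r * eps s * (eps s * X $$ (s, pix r))" by simp
    have e1: "eps r * eps s * eps r = eps s" "eps r * eps s * eps s = eps r"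
      by (metis eps_sq mult.commute mult.left_commute mult_1_right)+
    have "eps s * X $$ (r, pix s) = eps r * X $$ (s, pix r)"
      using E unfolding mult.assoc[symmetric] e1 .
    then have "cnj (eps s * X $$ (r, pix s)) = cnj (eps r * X $$ (s, pix r))" by simp
    then show ?thesis by simp
  qed
  then show ?thesis by (subst sp_iff) (auto simp: pi_lt)
qed

lemma tp_lin_left: "tp n (mat (2*n) (2*n) (\<lambda>rs. \<Sum>a\<in>S. c a * M a $$ rs)) Y = (\<Sum>a\<in>S. c a * tp n (M a) Y)"
  unfolding tp_def by (simp add: sum_distrib_right sum_distrib_left mult.assoc) (subst sum.swap, rule sum.cong, simp, subst sum.swap, simp)

lemma basis_sp: "is_sp_basis n B \<Longrightarrow> a < length B \<Longrightarrow> B ! a \<in> sp n"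
  unfolding is_sp_basis_def by auto

lemma cnj_sq: "cnj z * z = complex_of_real ((cmod z)^2)"
  using complex_norm_square[of z] by (simp add: mult.commute)

lemma nondeg: assumes bas: "is_sp_basis n B" and Y: "Y \<in> sp n"
  and h: "\<forall>a<length B. tp n (B!a) Y = 0"
  shows "\<forall>x<2*n. \<forall>y<2*n. Y $$ (x,y) = 0"
proof -
  let ?Yh = "mat (2*n) (2*n) (\<lambda>(r,s). cnj (Y $$ (s,r)))"
  have "?Yh \<in> sp n" by (rule sp_ct[OF Y])
  then obtain d where d: "?Yh = lincomb_mats n B d" using bas unfolding is_sp_basis_def by blast
  have "tp n ?Yh Y = (\<Sum>a<length B. d a * tp n (B!a) Y)"
    unfolding d lincomb_mats_def by (rule tp_lin_left)
  also have "\<dots> = 0" using h by simp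
  finally have 0: "tp n ?Yh Y = 0" .
  have "tp n ?Yh Y = (\<Sum>x<2*n. \<Sum>y<2*n. complex_of_real ((cmod (Y $$ (y,x)))^2))"
    unfolding tp_def by (auto intro!: sum.cong simp: cnj_sq simp del: of_real_power)
  with 0 have "(\<Sum>x<2*n. \<Sum>y<2*n. (cmod (Y $$ (y,x)))^2) = 0"
    by (metis (no_types, lifting) of_real_eq_0_iff of_real_sum sum.cong)
  then have "\<forall>x<2*n. (\<Sum>y<2*n. (cmod (Y $$ (y,x)))^2) = 0"
    by (subst (asm) sum_nonneg_eq_0_iff) (auto intro!: sum_nonneg)
  then have "\<forall>x<2*n. \<forall>y<2*n. (cmod (Y $$ (y,x)))^2 = 0"
    by (subst (asm) sum_nonneg_eq_0_iff) auto
  then show ?thesis by auto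
qed

definition gram :: "nat \<Rightarrow> complex mat list \<Rightarrow> complex mat" where
  "gram n B = mat (length B) (length B) (\<lambda>(a,b). tp n (B!a) (B!b))"

lemma tp_lincomb_right: "tp n X (lincomb_mats n B c) = (\<Sum>b<length B. c b * tp n X (B!b))"
  unfolding tp_def lincomb_mats_def
  by (simp add: sum_distrib_right sum_distrib_left mult.assoc mult.left_commute)
     (subst sum.swap, rule sum.cong, simp, subst sum.swap, simp)

lemma lincomb_sp: "is_sp_basis n B \<Longrightarrow> lincomb_mats n B c \<in> sp n"
  unfolding lincomb_mats_def by (rule sp_lin0) (auto intro: basis_sp)

lemma gram_det: assumes bas: "is_sp_basis n B"
  shows "det (gram n B) \<noteq> 0"
proof
  assume "det (gram n B) = 0"
  then obtain c where c: "c \<in> carrier_vec (length B)" "c \<noteq> 0\<^sub>v (length B)" "gram n B *\<^sub>v c = 0\<^sub>v (length B)"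
    by (subst (asm) det_0_iff_vec_prod_zero[of _ "length B"]) (auto simp: gram_def)
  let ?X = "lincomb_mats n B (\<lambda>b. c $ b)"
  have "tp n (B!a) ?X = 0" if "a < length B" for a
  proof -
    have "tp n (B!a) ?X = (gram n B *\<^sub>v c) $ a"
      using that c(1) unfolding tp_lincomb_right gram_def
      by (auto simp: scalar_prod_def atLeast0LessThan mult.commute intro!: sum.cong)
    then show ?thesis using c(3) that by simp
  qed
  then have "\<forall>x<2*n. \<forall>y<2*n. ?X $$ (x,y) = 0"
    using nondeg[OF bas lincomb_sp[OF bas]] by blast
  then have "?X = 0\<^sub>m (2*n) (2*n)" by (auto simp: lincomb_mats_def intro!: eq_matI)
  then have "\<forall>l<length B. c $ l = 0" using bas unfolding is_sp_basis_def by blast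
  then have "c = 0\<^sub>v (length B)" using c(1) by (auto intro!: eq_vecI)
  with c(2) show False by simp
qed

lemma dual_exists: assumes bas: "is_sp_basis n B" and l: "l < length B"
  shows "\<exists>X. X \<in> sp n \<and> (\<forall>l'<length B. mtrace ((B ! l') * X) = (if l' = l then 1 else 0))"
proof -
  let ?L = "length B"
  let ?G = "gram n B"
  have G: "?G \<in> carrier_mat ?L ?L" by (simp add: gram_def)
  let ?c = "(1 / det ?G) \<cdot>\<^sub>v (adj_mat ?G *\<^sub>v unit_vec ?L l)"
  note AD = adj_mat(1)[OF G] carrier_matD[OF adj_mat(1)[OF G]]
  have cc: "?c \<in> carrier_vec ?L" using AD by auto
  have "?G *\<^sub>v ?c = (1 / det ?G) \<cdot>\<^sub>v (?G *\<^sub>v (adj_mat ?G *\<^sub>v unit_vec ?L l))"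
    using AD G by (simp add: mult_mat_vec)
  also have "?G *\<^sub>v (adj_mat ?G *\<^sub>v unit_vec ?L l) = (?G * adj_mat ?G) *\<^sub>v unit_vec ?L l"
    using AD G by (simp add: assoc_mult_mat_vec)
  also have "\<dots> = det ?G \<cdot>\<^sub>v unit_vec ?L l"
    unfolding adj_mat(2)[OF G] by (auto intro!: eq_vecI simp: scalar_prod_def unit_vec_def)
  finally have Gc: "?G *\<^sub>v ?c = unit_vec ?L l" using gram_det[OF bas]
    by (auto intro!: eq_vecI)
  let ?X = "lincomb_mats n B (\<lambda>b. ?c $ b)"
  have "mtrace ((B ! a) * ?X) = (if a = l then 1 else 0)" if "a < ?L" for a
  proof -
    have "mtrace ((B ! a) * ?X) = tp n (B!a) ?X"
      using sp_carrier[OF basis_sp[OF bas that]] sp_carrier[OF lincomb_sp[OF bas]]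
      by (rule mtrace_tp)
    also have "\<dots> = (?G *\<^sub>v ?c) $ a"
      using that cc AD unfolding tp_lincomb_right gram_def
      by (auto simp: scalar_prod_def atLeast0LessThan mult.commute intro!: sum.cong)
    finally show ?thesis using Gc that l by simp
  qed
  then show ?thesis using lincomb_sp[OF bas] by blast
qed

lemma dualB_prop: assumes bas: "is_sp_basis n B" and l: "l < length B"
  shows "dualB n B l \<in> sp n" "\<And>a. a < length B \<Longrightarrow> tp n (B!a) (dualB n B l) = (if a = l then 1 else 0)"
proof -
  have *: "dualB n B l \<in> sp n \<and> (\<forall>l'<length B. mtrace ((B ! l') * dualB n B l) = (if l' = l then 1 else 0))"
    unfolding dualB_def by (rule someI_ex[OF dual_exists[OF assms]])
  then show "dualB n B l \<in> sp n" by blast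
  fix a assume a: "a < length B"
  show "tp n (B!a) (dualB n B l) = (if a = l then 1 else 0)"
    using * a mtrace_tp[OF sp_carrier[OF basis_sp[OF bas a]] sp_carrier[of "dualB n B l"]] by auto
qed

lemma reconstruct: assumes bas: "is_sp_basis n B" and X: "X \<in> sp n"
  and x: "x < 2*n" and y: "y < 2*n"
  shows "(\<Sum>a<length B. tp n (B!a) X * dualB n B a $$ (x,y)) = X $$ (x,y)"
proof -
  let ?W = "mat (2*n) (2*n) (\<lambda>rs. (\<Sum>a\<in>{..<length B}. tp n (B!a) X * dualB n B a $$ rs) - 1 * X $$ rs)"
  have W: "?W \<in> sp n" by (rule sp_lin[OF _ X]) (auto intro: dualB_prop[OF bas])
  have "tp n (B!b) ?W = 0" if b: "b < length B" for b
  proof -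
    have "tp n (B!b) ?W = (\<Sum>a<length B. tp n (B!a) X * tp n (B!b) (dualB n B a)) - tp n (B!b) X"
      unfolding tp_def
      by (simp add: sum_distrib_right sum_distrib_left mult.assoc mult.left_commute right_diff_distrib left_diff_distrib sum_subtractf)
         (subst sum.swap, rule sum.cong, simp, subst sum.swap, simp)
    also have "\<dots> = (\<Sum>a<length B. (if a = b then tp n (B!a) X else 0)) - tp n (B!b) X"
      using dualB_prop(2)[OF bas _ b] by (auto intro!: sum.cong)
    also have "\<dots> = 0" using b by simp
    finally show ?thesis .
  qed
  then have "?W $$ (x,y) = 0" using nondeg[OF bas W] x y by blast
  then show ?thesis using x y by simp
qed

lemma coeff_lin_mult: "coeff ([:a, b:] * q) d = a * coeff q d + (if d = 0 then 0 else b * coeff q (d - 1))"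
  by (cases d) auto

lemma coeff_prod_lin: assumes "finite S"
  shows "coeff (\<Prod>x\<in>S. [:a x, b x:]) d =
    (\<Sum>T\<in>Pow S. if card T = d then (\<Prod>x\<in>T. b x) * (\<Prod>x\<in>S - T. a x) else 0)"
  using assms
proof (induction S arbitrary: d rule: finite_induct)
  case empty
  then show ?case by simp
next
  case (insert y S)
  have inj: "inj_on (insert y) (Pow S)" using insert(2) by (auto simp: inj_on_def)
  have disj: "Pow S \<inter> insert y ` Pow S = {}" using insert(2) by auto
  have fin: "finite (Pow S)" "finite (insert y ` Pow S)" using insert(1) by auto
  let ?f = "\<lambda>S' T. if card T = d then (\<Prod>x\<in>T. b x) * (\<Prod>x\<in>S' - T. a x) else 0"
  have "(\<Sum>T\<in>Pow (insert y S). ?f (insert y S) T) =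
      (\<Sum>T\<in>Pow S. ?f (insert y S) T) + (\<Sum>T\<in>insert y ` Pow S. ?f (insert y S) T)"
    unfolding Pow_insert by (rule sum.union_disjoint[OF fin disj])
  also have "(\<Sum>T\<in>Pow S. ?f (insert y S) T) = a y * (\<Sum>T\<in>Pow S. ?f S T)"
  proof -
    have "?f (insert y S) T = a y * ?f S T" if "T \<in> Pow S" for T
    proof -
      have "insert y S - T = insert y (S - T)" using that insert(2) by auto
      then show ?thesis using insert(1,2) that by (auto simp: finite_subset ac_simps)
    qed
    then show ?thesis by (simp add: sum_distrib_left)
  qed
  also have "(\<Sum>T\<in>insert y ` Pow S. ?f (insert y S) T) = (\<Sum>T\<in>Pow S. ?f (insert y S) (insert y T))"
    by (rule sum.reindex[OF inj, unfolded comp_def])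
  also have "\<dots> = (if d = 0 then 0 else b y * (\<Sum>T\<in>Pow S. if card T = d - 1 then (\<Prod>x\<in>T. b x) * (\<Prod>x\<in>S - T. a x) else 0))"
  proof -
    have "?f (insert y S) (insert y T) = (if d = 0 then 0 else b y * (if card T = d - 1 then (\<Prod>x\<in>T. b x) * (\<Prod>x\<in>S - T. a x) else 0))"
      if "T \<in> Pow S" for T
    proof -
      have fT: "finite T" using that insert(1) by (auto simp: finite_subset)
      have yT: "y \<notin> T" using that insert(2) by auto
      have e1: "insert y S - insert y T = S - T" using insert(2) by auto
      have e2: "card (insert y T) = Suc (card T)" using fT yT by simp
      have e3: "prod b (insert y T) = b y * prod b T" using fT yT by simp
      show ?thesis unfolding e1 e2 e3 by (cases d) (simp_all add: mult.assoc)
    qed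
    then show ?thesis by (auto simp: sum_distrib_left)
  qed
  finally have R: "(\<Sum>T\<in>Pow (insert y S). ?f (insert y S) T) = a y * (\<Sum>T\<in>Pow S. ?f S T) +
    (if d = 0 then 0 else b y * (\<Sum>T\<in>Pow S. if card T = d - 1 then (\<Prod>x\<in>T. b x) * (\<Prod>x\<in>S - T. a x) else 0))" .
  have L: "coeff (\<Prod>x\<in>insert y S. [:a x, b x:]) d = a y * coeff (\<Prod>x\<in>S. [:a x, b x:]) d +
     (if d = 0 then 0 else b y * coeff (\<Prod>x\<in>S. [:a x, b x:]) (d - 1))"
    by (simp only: prod.insert[OF insert(1,2)] coeff_lin_mult)
  show ?case unfolding L R insert.IH by simp
qed

definition PP :: "nat \<Rightarrow> (nat \<Rightarrow> nat) set" where "PP n = {p. p permutes {0..<2*n}}"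
definition SS :: "nat \<Rightarrow> nat \<Rightarrow> nat set set" where "SS n i = {T \<in> Pow {0..<2*n}. card T = 2*i}"
lemma finite_PP[simp]: "finite (PP n)" unfolding PP_def by (simp add: finite_permutations)
lemma finite_SS[simp]: "finite (SS n i)" unfolding SS_def by simp
lemma lin_entry: "(if c then 1 else 0) - [:0, a:] = [:(if c then 1 else 0), - (a::complex):]"
  by (cases c; rule poly_eqI; simp add: coeff_pCons split: nat.split)
definition kap :: "nat \<Rightarrow> (nat \<Rightarrow> nat) \<Rightarrow> nat set \<Rightarrow> complex" where
  "kap n p T = of_int (sign p) * (\<Prod>x\<in>{0..<2*n} - T. if x = p x then 1 else 0)"
definition Qe :: "nat \<Rightarrow> nat \<Rightarrow> (nat \<Rightarrow> nat \<Rightarrow> complex) \<Rightarrow> complex" where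
  "Qe n i a = (\<Sum>p\<in>PP n. \<Sum>T\<in>SS n i. kap n p T * (\<Prod>j\<in>T. - a j (p j)))"

lemma coeff_of_int_mult: "coeff (of_int k * q) d = of_int k * coeff (q :: complex poly) d"
  by (simp only: of_int_poly mult_pCons_left) simp

lemma P_entry: fixes A :: "complex mat" assumes A: "A \<in> carrier_mat (2*n) (2*n)" and "x < 2*n" "y < 2*n"
   shows "(1\<^sub>m (2*n) - map_mat (\<lambda>a. [:0, a:]) A) $$ (x, y) = [:(if x = y then 1 else 0), - A $$ (x,y):]"
proof -
  have "(1\<^sub>m (2*n) - map_mat (\<lambda>a. [:0, a:]) A) $$ (x, y) = (if x = y then 1 else 0) - [:0, A $$ (x,y):]"
    using assms by simp
  also have "\<dots> = [:(if x = y then 1 else 0), - A $$ (x,y):]" by (rule lin_entry)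
  finally show ?thesis .
qed

lemma Q_eq: assumes A: "A \<in> carrier_mat (2*n) (2*n)"
  shows "Qf n i A w = Qe n i (\<lambda>u v. A $$ (u,v))"
proof -
  let ?P = "1\<^sub>m (2*n) - map_mat (\<lambda>a. [:0, a:]) A"
  have P: "?P \<in> carrier_mat (2*n) (2*n)" using A by auto
  have ent: "?P $$ (x, p x) = [:(if x = p x then 1 else 0), - A $$ (x, p x):]"
    if "p \<in> PP n" "x \<in> {0..<2*n}" for p x
  proof -
    have "p x \<in> {0..<2*n}" using that unfolding PP_def by (simp add: permutes_in_image)
    then show ?thesis using that by (intro P_entry[OF A]) auto
  qed
  have "detpoly n A = (\<Sum>p\<in>PP n. of_int (sign p) * (\<Prod>x\<in>{0..<2*n}. ?P $$ (x, p x)))"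
    unfolding detpoly_def det_def'[OF P] PP_def ..
  also have "\<dots> = (\<Sum>p\<in>PP n. of_int (sign p) * (\<Prod>x\<in>{0..<2*n}. [:(if x = p x then 1 else 0), - A $$ (x, p x):]))"
    by (rule sum.cong[OF refl], rule arg_cong[where f="\<lambda>q. _ * q"], rule prod.cong[OF refl], rule ent)
  finally have "Qf n i A w = (\<Sum>p\<in>PP n. of_int (sign p) * coeff (\<Prod>x\<in>{0..<2*n}. [:(if x = p x then 1 else 0), - A $$ (x, p x):]) (2*i))"
    unfolding Qf_def by (simp only: coeff_sum coeff_of_int_mult)
  also have "\<dots> = Qe n i (\<lambda>u v. A $$ (u,v))"
    unfolding Qe_def
  proof (rule sum.cong[OF refl])
    fix p assume "p \<in> PP n"
    show "of_int (sign p) * coeff (\<Prod>x\<in>{0..<2*n}. [:(if x = p x then 1 else 0), - A $$ (x, p x):]) (2*i) =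
      (\<Sum>T\<in>SS n i. kap n p T * (\<Prod>j\<in>T. - A $$ (j, p j)))"
      unfolding coeff_prod_lin[OF finite_atLeastLessThan] SS_def kap_def
      by (subst sum.inter_filter) (auto simp: sum_distrib_left ac_simps intro!: sum.cong)
  qed
  finally show ?thesis .
qed

definition D1e :: "nat \<Rightarrow> nat \<Rightarrow> (nat \<Rightarrow> nat \<Rightarrow> complex) \<Rightarrow> (nat \<Rightarrow> nat \<Rightarrow> complex) \<Rightarrow> complex" where
  "D1e n i a y = (\<Sum>p\<in>PP n. \<Sum>T\<in>SS n i. kap n p T *
      (\<Sum>m\<in>T. (- y m (p m)) * (\<Prod>j\<in>T-{m}. - a j (p j))))"

definition D2e :: "nat \<Rightarrow> nat \<Rightarrow> (nat \<Rightarrow> nat \<Rightarrow> complex) \<Rightarrow> (nat \<Rightarrow> nat \<Rightarrow> complex) \<Rightarrow> (nat \<Rightarrow> nat \<Rightarrow> complex) \<Rightarrow> complex" where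
  "D2e n i a x y = (\<Sum>p\<in>PP n. \<Sum>T\<in>SS n i. kap n p T *
      (\<Sum>m\<in>T. (- y m (p m)) * (\<Sum>k\<in>T-{m}. (- x k (p k)) * (\<Prod>j\<in>T-{m}-{k}. - a j (p j)))))"

lemma prod_lin_deriv: "((\<lambda>t. \<Prod>j\<in>T. - (a j + t * b j)) has_field_derivative
    (\<Sum>m\<in>T. (- b m) * (\<Prod>j\<in>T-{m}. - (a j :: complex)))) (at 0)"
proof -
  have "((\<lambda>t. \<Prod>j\<in>T. - (a j + t * b j)) has_field_derivative
    (\<Sum>m\<in>T. (- b m) * (\<Prod>j\<in>T-{m}. - (a j + 0 * b j)))) (at 0)"
    by (rule has_field_derivative_prod) (auto intro!: derivative_eq_intros)
  then show ?thesis by simp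
qed

lemma Qe_deriv: "((\<lambda>t. Qe n i (\<lambda>u v. a u v + t * y u v)) has_field_derivative D1e n i a y) (at 0)"
  unfolding Qe_def D1e_def
  by (intro DERIV_sum DERIV_cmult prod_lin_deriv)

lemma D1e_deriv: "((\<lambda>s. D1e n i (\<lambda>u v. a u v + s * x u v) y) has_field_derivative D2e n i a x y) (at 0)"
  unfolding D1e_def D2e_def
  by (intro DERIV_sum DERIV_cmult prod_lin_deriv)

lemma deriv0_eq: "(f has_field_derivative D) (at 0) \<Longrightarrow> deriv0 f = D"
  unfolding deriv0_def by (rule some_equality) (auto intro: DERIV_unique)

lemma deriv0_const: "deriv0 (\<lambda>t. c) = 0"
  by (rule deriv0_eq) (rule DERIV_const)

lemma PP_SS_bound: "p \<in> PP n \<Longrightarrow> T \<in> SS n i \<Longrightarrow> j \<in> T \<Longrightarrow> j < 2*n \<and> p j < 2*n"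
  unfolding PP_def SS_def using permutes_in_image[of p "{0..<2*n}" j] by auto

abbreviation "inr n a a' \<equiv> (\<forall>u<2*n. \<forall>v<2*n. a u v = a' u v)"

lemma Qe_cong: "inr n a a' \<Longrightarrow> Qe n i a = Qe n i a'"
  unfolding Qe_def by (intro sum.cong refl arg_cong[where f="\<lambda>q. _ * q"] prod.cong) (auto dest: PP_SS_bound)

lemma D1e_cong: assumes "inr n a a'" "inr n y y'" shows "D1e n i a y = D1e n i a' y'"
proof -
  have "(- y m (p m)) * (\<Prod>j\<in>T-{m}. - a j (p j)) = (- y' m (p m)) * (\<Prod>j\<in>T-{m}. - a' j (p j))"
    if p: "p \<in> PP n" and T: "T \<in> SS n i" and m: "m \<in> T" for p T m
  proof -
    have "(\<Prod>j\<in>T-{m}. - a j (p j)) = (\<Prod>j\<in>T-{m}. - a' j (p j))"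
      using PP_SS_bound[OF p T] assms(1) by (intro prod.cong) auto
    moreover have "y m (p m) = y' m (p m)" using PP_SS_bound[OF p T m] assms(2) by auto
    ultimately show ?thesis by simp
  qed
  then show ?thesis unfolding D1e_def by (intro sum.cong refl arg_cong[where f="\<lambda>q. _ * q"]) auto
qed

lemma D2e_cong: assumes "inr n a a'" "inr n x x'" "inr n y y'" shows "D2e n i a x y = D2e n i a' x' y'"
proof -
  have F: "(- x k (p k)) * (\<Prod>j\<in>T-{m}-{k}. - a j (p j)) = (- x' k (p k)) * (\<Prod>j\<in>T-{m}-{k}. - a' j (p j))"
    if p: "p \<in> PP n" and T: "T \<in> SS n i" and k: "k \<in> T" for p T m k
  proof -
    have "(\<Prod>j\<in>T-{m}-{k}. - a j (p j)) = (\<Prod>j\<in>T-{m}-{k}. - a' j (p j))"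
      using PP_SS_bound[OF p T] assms(1) by (intro prod.cong) auto
    moreover have "x k (p k) = x' k (p k)" using PP_SS_bound[OF p T k] assms(2) by auto
    ultimately show ?thesis by simp
  qed
  have Y: "y m (p m) = y' m (p m)"
    if p: "p \<in> PP n" and T: "T \<in> SS n i" and m: "m \<in> T" for p T m
    using PP_SS_bound[OF p T m] assms(3) by auto
  have I: "(- y m (p m)) * (\<Sum>k\<in>T-{m}. (- x k (p k)) * (\<Prod>j\<in>T-{m}-{k}. - a j (p j))) =
     (- y' m (p m)) * (\<Sum>k\<in>T-{m}. (- x' k (p k)) * (\<Prod>j\<in>T-{m}-{k}. - a' j (p j)))"
    if p: "p \<in> PP n" and T: "T \<in> SS n i" and m: "m \<in> T" for p T m
  proof -
    have "(\<Sum>k\<in>T-{m}. (- x k (p k)) * (\<Prod>j\<in>T-{m}-{k}. - a j (p j))) =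
      (\<Sum>k\<in>T-{m}. (- x' k (p k)) * (\<Prod>j\<in>T-{m}-{k}. - a' j (p j)))"
      by (rule sum.cong[OF refl], rule F[OF p T]) auto
    then show ?thesis using Y[OF p T m] by simp
  qed
  show ?thesis unfolding D2e_def
    apply (rule sum.cong[OF refl], rule sum.cong[OF refl], rule arg_cong[where f="\<lambda>q. _ * q"], rule sum.cong[OF refl])
    using I by blast
qed

abbreviation "tau m k \<equiv> Transposition.transpose m k"
abbreviation "PiA n a p T m k \<equiv> (\<Prod>j\<in>T-{m}-{k}. - a j (p j) :: complex)"

lemma PP_tau: "p \<in> PP n \<Longrightarrow> m < 2*n \<Longrightarrow> k < 2*n \<Longrightarrow> p \<circ> tau m k \<in> PP n"
  unfolding PP_def by (auto intro!: permutes_compose permutes_swap_id)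

lemma sum_PP_tau: assumes "m < 2*n" "k < 2*n"
  shows "(\<Sum>p\<in>PP n. F (p \<circ> tau m k)) = (\<Sum>p\<in>PP n. F p)"
  by (rule sum.reindex_bij_witness[where i="\<lambda>p. p \<circ> tau m k" and j="\<lambda>p. p \<circ> tau m k"])
     (auto simp: comp_assoc PP_tau assms)

lemma kap_tau: assumes p: "p \<in> PP n" and T: "T \<in> SS n i" and m: "m \<in> T" and k: "k \<in> T" and mk: "m \<noteq> k"
  shows "kap n (p \<circ> tau m k) T = - kap n p T"
proof -
  have I: "T \<subseteq> {0..<2*n}" using T unfolding SS_def by auto
  have perm: "permutation p" using p unfolding PP_def by (auto intro: permutes_imp_permutation)
  have "sign (p \<circ> tau m k) = sign p * sign (tau m k)"
    by (rule sign_compose[OF perm]) (simp add: permutation_permutes, metis finite.emptyI finite_insert permutes_swap_id insertI1 insert_commute)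
  then have s: "sign (p \<circ> tau m k) = - sign p" using mk by (simp add: sign_swap_id)
  have "(\<Prod>x\<in>{0..<2*n} - T. if x = (p \<circ> tau m k) x then 1 else 0) = (\<Prod>x\<in>{0..<2*n} - T. if x = p x then (1::complex) else 0)"
  proof (rule prod.cong[OF refl])
    fix x assume x: "x \<in> {0..<2*n} - T"
    then have "x \<noteq> m" "x \<noteq> k" using m k by auto
    then show "(if x = (p \<circ> tau m k) x then 1 else 0) = (if x = p x then (1::complex) else 0)" by simp
  qed
  then show ?thesis unfolding kap_def s by simp
qed

lemma PiA_tau: assumes "m \<in> T" "k \<in> T"
  shows "PiA n a (p \<circ> tau m k) T m k = PiA n a p T m k"
  by (intro prod.cong) auto

lemma D2e_reorder: "D2e n i a x y = (\<Sum>T\<in>SS n i. \<Sum>m\<in>T. \<Sum>k\<in>T-{m}. \<Sum>p\<in>PP n.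
     kap n p T * (y m (p m) * (x k (p k) * PiA n a p T m k)))"
proof -
  have "D2e n i a x y = (\<Sum>p\<in>PP n. \<Sum>T\<in>SS n i. \<Sum>m\<in>T. \<Sum>k\<in>T-{m}.
     kap n p T * (y m (p m) * (x k (p k) * PiA n a p T m k)))"
    unfolding D2e_def by (simp add: sum_distrib_left)
  also have "\<dots> = (\<Sum>T\<in>SS n i. \<Sum>p\<in>PP n. \<Sum>m\<in>T. \<Sum>k\<in>T-{m}.
     kap n p T * (y m (p m) * (x k (p k) * PiA n a p T m k)))"
    by (rule sum.swap)
  also have "\<dots> = (\<Sum>T\<in>SS n i. \<Sum>m\<in>T. \<Sum>p\<in>PP n. \<Sum>k\<in>T-{m}.
     kap n p T * (y m (p m) * (x k (p k) * PiA n a p T m k)))"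
    by (rule sum.cong[OF refl], rule sum.swap)
  also have "\<dots> = (\<Sum>T\<in>SS n i. \<Sum>m\<in>T. \<Sum>k\<in>T-{m}. \<Sum>p\<in>PP n.
     kap n p T * (y m (p m) * (x k (p k) * PiA n a p T m k)))"
    by (rule sum.cong[OF refl], rule sum.cong[OF refl], rule sum.swap)
  finally show ?thesis .
qed

lemma antisym_sum: fixes G :: "nat \<Rightarrow> nat \<Rightarrow> complex"
  assumes "finite T" and as: "\<And>m k. m \<in> T \<Longrightarrow> k \<in> T \<Longrightarrow> m \<noteq> k \<Longrightarrow> G k m = - G m k"
  shows "(\<Sum>m\<in>T. \<Sum>k\<in>T-{m}. G m k) = 0"
proof -
  let ?H = "\<lambda>m k. if k \<noteq> m then G m k else 0"
  let ?S = "\<Sum>m\<in>T. \<Sum>k\<in>T-{m}. G m k"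
  have e: "(\<Sum>k\<in>T-{m}. G m k) = (\<Sum>k\<in>T. ?H m k)" for m
  proof -
    have "T - {m} = {k\<in>T. k \<noteq> m}" by auto
    then show ?thesis by (simp only: sum.inter_filter[OF assms(1)])
  qed
  have h: "?H k m = - ?H m k" if "m \<in> T" "k \<in> T" for m k
    using as[OF that] by (cases "m = k") auto
  have "?S = (\<Sum>m\<in>T. \<Sum>k\<in>T. ?H m k)" by (simp only: e)
  also have "\<dots> = (\<Sum>k\<in>T. \<Sum>m\<in>T. ?H m k)" by (rule sum.swap)
  also have "\<dots> = (\<Sum>k\<in>T. \<Sum>m\<in>T. - ?H k m)"
    by (rule sum.cong[OF refl], rule sum.cong[OF refl]) (metis h add.inverse_inverse)
  also have "\<dots> = - (\<Sum>k\<in>T. \<Sum>m\<in>T. ?H k m)"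
    by (simp only: sum_negf)
  finally have "?S = - ?S" by (simp only: e)
  then show ?thesis by simp
qed

lemma SS_sub: "T \<in> SS n i \<Longrightarrow> m \<in> T \<Longrightarrow> m < 2*n"
  unfolding SS_def by auto

lemma SS_fin: "T \<in> SS n i \<Longrightarrow> finite T"
  unfolding SS_def by (auto intro: finite_subset)

lemma D2e_zero1: "D2e n i a (\<lambda>k c. v k * g c) (\<lambda>m c. w m * g c) = 0"
proof -
  have "(\<Sum>p\<in>PP n. kap n p T * (w m * g (p m) * (v k * g (p k) * PiA n a p T m k))) = 0"
    if T: "T \<in> SS n i" and m: "m \<in> T" and k: "k \<in> T - {m}" for T m k
  proof -
    let ?F = "\<lambda>p. kap n p T * (w m * g (p m) * (v k * g (p k) * PiA n a p T m k))"
    have mk: "m < 2*n" "k < 2*n" "k \<in> T" "m \<noteq> k" using SS_sub[OF T] m k by auto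
    have "(\<Sum>p\<in>PP n. ?F p) = (\<Sum>p\<in>PP n. ?F (p \<circ> tau m k))" by (rule sum_PP_tau[OF mk(1,2), of ?F, symmetric])
    also have "\<dots> = (\<Sum>p\<in>PP n. - ?F p)"
    proof (rule sum.cong[OF refl])
      fix p assume p: "p \<in> PP n"
      have "?F (p \<circ> tau m k) = - kap n p T * (w m * g (p k) * (v k * g (p m) * PiA n a p T m k))"
        unfolding kap_tau[OF p T m mk(3,4)] PiA_tau[OF m mk(3)] by simp
      then show "?F (p \<circ> tau m k) = - ?F p" by (simp add: mult_ac)
    qed
    finally show ?thesis by (simp add: sum_negf)
  qed
  then show ?thesis unfolding D2e_reorder by simp
qed

lemma D2e_zero2: "D2e n i a (\<lambda>k c. w k * h c) (\<lambda>m c. w m * g c) = 0"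
proof -
  let ?G = "\<lambda>T m k. (\<Sum>p\<in>PP n. kap n p T * (w m * g (p m) * (w k * h (p k) * PiA n a p T m k)))"
  have "?G T k m = - ?G T m k" if T: "T \<in> SS n i" and m: "m \<in> T" and k: "k \<in> T" and mk0: "m \<noteq> k" for T m k
  proof -
    have mk: "m < 2*n" "k < 2*n" using SS_sub[OF T] m k by auto
    have D: "T - {k} - {m} = T - {m} - {k}" by auto
    have "?G T k m = (\<Sum>p\<in>PP n. kap n (p \<circ> tau m k) T * (w k * g ((p \<circ> tau m k) k) * (w m * h ((p \<circ> tau m k) m) * PiA n a (p \<circ> tau m k) T m k)))"
      unfolding D by (rule sum_PP_tau[OF mk, of "\<lambda>p. kap n p T * (w k * g (p k) * (w m * h (p m) * PiA n a p T m k))", symmetric])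
    also have "\<dots> = (\<Sum>p\<in>PP n. - (kap n p T * (w m * g (p m) * (w k * h (p k) * PiA n a p T m k))))"
    proof (rule sum.cong[OF refl])
      fix p assume p: "p \<in> PP n"
      show "kap n (p \<circ> tau m k) T * (w k * g ((p \<circ> tau m k) k) * (w m * h ((p \<circ> tau m k) m) * PiA n a (p \<circ> tau m k) T m k))
         = - (kap n p T * (w m * g (p m) * (w k * h (p k) * PiA n a p T m k)))"
        unfolding kap_tau[OF p T m k mk0] PiA_tau[OF m k] by (simp add: mult_ac)
    qed
    also have "\<dots> = - ?G T m k" by (simp add: sum_negf)
    finally show ?thesis .
  qed
  note AS = this
  have "(\<Sum>m\<in>T. \<Sum>k\<in>T-{m}. ?G T m k) = 0" if "T \<in> SS n i" for T
    by (rule antisym_sum[OF SS_fin[OF that]]) (rule AS[OF that])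
  then show ?thesis unfolding D2e_reorder by simp
qed

lemma D2e_addx: "D2e n i a (\<lambda>u v. x1 u v + x2 u v) y = D2e n i a x1 y + D2e n i a x2 y"
  unfolding D2e_def by (simp add: algebra_simps sum.distrib sum_subtractf sum_negf)

lemma D2e_smx: "D2e n i a (\<lambda>u v. c * x u v) y = c * D2e n i a x y"
  unfolding D2e_def by (simp add: sum_distrib_left mult_ac)

lemma D2e_addy: "D2e n i a x (\<lambda>u v. y1 u v + y2 u v) = D2e n i a x y1 + D2e n i a x y2"
  unfolding D2e_def by (simp add: algebra_simps sum.distrib sum_subtractf sum_negf)

lemma D2e_smy: "D2e n i a x (\<lambda>u v. c * y u v) = c * D2e n i a x y"
  unfolding D2e_def by (simp add: sum_distrib_left mult_ac)

lemma D2e_sumx: "finite S \<Longrightarrow> D2e n i a (\<lambda>u v. \<Sum>s\<in>S. c s * x s u v) y = (\<Sum>s\<in>S. c s * D2e n i a (x s) y)"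
proof (induction S rule: finite_induct)
  case empty
  have "D2e n i a (\<lambda>u v. 0 * x0 u v) y = 0 * D2e n i a x0 y" for x0 by (rule D2e_smx)
  then show ?case by simp
next
  case (insert s S)
  have "D2e n i a (\<lambda>u v. \<Sum>s\<in>insert s S. c s * x s u v) y = D2e n i a (\<lambda>u v. c s * x s u v + (\<Sum>s\<in>S. c s * x s u v)) y"
    using insert(1,2) by simp
  also have "\<dots> = c s * D2e n i a (x s) y + D2e n i a (\<lambda>u v. \<Sum>s\<in>S. c s * x s u v) y"
    by (simp only: D2e_addx D2e_smx)
  finally show ?case using insert by simp
qed

lemma D2e_sumy: "finite S \<Longrightarrow> D2e n i a x (\<lambda>u v. \<Sum>s\<in>S. c s * y s u v) = (\<Sum>s\<in>S. c s * D2e n i a x (y s))"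
proof (induction S rule: finite_induct)
  case empty
  have "D2e n i a x (\<lambda>u v. 0 * y0 u v) = 0 * D2e n i a x y0" for y0 by (rule D2e_smy)
  then show ?case by simp
next
  case (insert s S)
  have "D2e n i a x (\<lambda>u v. \<Sum>s\<in>insert s S. c s * y s u v) = D2e n i a x (\<lambda>u v. c s * y s u v + (\<Sum>s\<in>S. c s * y s u v))"
    using insert(1,2) by simp
  also have "\<dots> = c s * D2e n i a x (y s) + D2e n i a x (\<lambda>u v. \<Sum>s\<in>S. c s * y s u v)"
    by (simp only: D2e_addy D2e_smy)
  finally show ?case using insert by simp
qed

abbreviation ent :: "complex mat \<Rightarrow> nat \<Rightarrow> nat \<Rightarrow> complex" where "ent M \<equiv> \<lambda>u v. M $$ (u,v)"

lemma dualB_carrier: "is_sp_basis n B \<Longrightarrow> l < length B \<Longrightarrow> dualB n B l \<in> carrier_mat (2*n) (2*n)"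
  using dualB_prop(1) sp_carrier by blast

lemma pd1: assumes bas: "is_sp_basis n B" and l: "l < length B" and A: "A' \<in> carrier_mat (2*n) (2*n)"
  shows "pd n B (GS l) (Qf n i) A' w' = D1e n i (ent A') (ent (dualB n B l))"
proof -
  let ?D = "dualB n B l"
  have D: "?D \<in> carrier_mat (2*n) (2*n)" by (rule dualB_carrier[OF bas l])
  have "(\<lambda>t. Qf n i (A' + t \<cdot>\<^sub>m ?D) w') = (\<lambda>t. Qe n i (\<lambda>u v. ent A' u v + t * ent ?D u v))"
  proof
    fix t
    have C: "A' + t \<cdot>\<^sub>m ?D \<in> carrier_mat (2*n) (2*n)" using A D by auto
    show "Qf n i (A' + t \<cdot>\<^sub>m ?D) w' = Qe n i (\<lambda>u v. ent A' u v + t * ent ?D u v)"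
      unfolding Q_eq[OF C] by (rule Qe_cong) (use A D in auto)
  qed
  then show ?thesis by (simp add: deriv0_eq[OF Qe_deriv])
qed

lemma pd2: assumes bas: "is_sp_basis n B" and l: "l < length B" and a: "a < length B"
  and A: "A \<in> carrier_mat (2*n) (2*n)"
  shows "pd n B (GS a) (pd n B (GS l) (Qf n i)) A w = D2e n i (ent A) (ent (dualB n B a)) (ent (dualB n B l))"
proof -
  let ?D = "dualB n B a"
  have D: "?D \<in> carrier_mat (2*n) (2*n)" by (rule dualB_carrier[OF bas a])
  have "(\<lambda>s. pd n B (GS l) (Qf n i) (A + s \<cdot>\<^sub>m ?D) w) = (\<lambda>s. D1e n i (\<lambda>u v. ent A u v + s * ent ?D u v) (ent (dualB n B l)))"
  proof
    fix s
    have C: "A + s \<cdot>\<^sub>m ?D \<in> carrier_mat (2*n) (2*n)" using A D by auto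
    show "pd n B (GS l) (Qf n i) (A + s \<cdot>\<^sub>m ?D) w = D1e n i (\<lambda>u v. ent A u v + s * ent ?D u v) (ent (dualB n B l))"
      unfolding pd1[OF bas l C] by (rule D1e_cong) (use A D in auto)
  qed
  then show ?thesis by (simp add: deriv0_eq[OF D1e_deriv])
qed

lemma pdGV_F: "pd n B (GV k) (pd n B (GS l) (Qf n i)) A w = 0"
  by (simp add: Qf_def deriv0_const)

lemma pdGS_G: "pd n B (GS a) (genV n v) A w = 0"
  by (simp add: genV_def deriv0_const)

lemma pdGV_G: assumes k: "k < 2*n" and v: "ev n v" and w: "ev n w"
  shows "pd n B (GV k) (genV n v) A w = v $ k"
proof -
  have "(\<lambda>t. omega n v (w + t \<cdot>\<^sub>v vstar n k)) = (\<lambda>t. omega n v w + t * omega n v (vstar n k))"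
    using omega_lin_right[OF v w vstar_carrier[OF k]] by auto
  moreover have "((\<lambda>t. omega n v w + t * omega n v (vstar n k)) has_field_derivative omega n v (vstar n k)) (at 0)"
    by (auto intro!: derivative_eq_intros)
  ultimately show ?thesis using omega_vstar_right[OF k v] by (simp add: genV_def deriv0_eq)
qed

lemma sum_gens: "(\<Sum>a\<in>gens n B. f a) = (\<Sum>l<length B. f (GS l)) + (\<Sum>k<2*n. f (GV k))"
proof -
  have "(\<Sum>a\<in>gens n B. f a) = (\<Sum>a\<in>GS ` {..<length B}. f a) + (\<Sum>a\<in>GV ` {..<2*n}. f a)"
    unfolding gens_def by (rule sum.union_disjoint) auto
  also have "\<dots> = (\<Sum>l<length B. f (GS l)) + (\<Sum>k<2*n. f (GV k))"
    by (simp add: sum.reindex inj_on_def)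
  finally show ?thesis .
qed

lemma brgen_GS_GV: "brgen n B \<zeta> K (GS a) (GV k) A w = omega n (B!a *\<^sub>v unit_vec (2*n) k) w"
  by (simp add: genV_def)

lemma pbr_expand: assumes bas: "is_sp_basis n B" and l: "l < length B"
  and A: "A \<in> carrier_mat (2*n) (2*n)" and v: "ev n v" and w: "ev n w"
  shows "pbr n B \<zeta> K (pd n B (GS l) (Qf n i)) (genV n v) A w =
    (\<Sum>a<length B. \<Sum>k<2*n. D2e n i (ent A) (ent (dualB n B a)) (ent (dualB n B l)) * v $ k *
        omega n (B ! a *\<^sub>v unit_vec (2*n) k) w)"
proof -
  let ?F = "pd n B (GS l) (Qf n i)"
  let ?G = "genV n v"
  have "pbr n B \<zeta> K ?F ?G A w = (\<Sum>a<length B. \<Sum>b\<in>gens n B. pd n B (GS a) ?F A w * pd n B b ?G A w * brgen n B \<zeta> K (GS a) b A w)"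
    unfolding pbr_def sum_gens by (simp del: pd.simps add: pdGV_F)
  also have "\<dots> = (\<Sum>a<length B. \<Sum>k<2*n. pd n B (GS a) ?F A w * pd n B (GV k) ?G A w * brgen n B \<zeta> K (GS a) (GV k) A w)"
    unfolding sum_gens by (simp del: pd.simps add: pdGS_G)
  also have "\<dots> = (\<Sum>a<length B. \<Sum>k<2*n. D2e n i (ent A) (ent (dualB n B a)) (ent (dualB n B l)) * v $ k *
        omega n (B ! a *\<^sub>v unit_vec (2*n) k) w)"
  proof (intro sum.cong refl)
    fix a k assume a: "a \<in> {..<length B}" and k: "k \<in> {..<2*n}"
    have 1: "pd n B (GS a) ?F A w = D2e n i (ent A) (ent (dualB n B a)) (ent (dualB n B l))"
      using a by (intro pd2[OF bas l _ A]) auto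
    have 2: "pd n B (GV k) ?G A w = v $ k" using k by (intro pdGV_G[OF _ v w]) auto
    show "pd n B (GS a) ?F A w * pd n B (GV k) ?G A w * brgen n B \<zeta> K (GS a) (GV k) A w =
      D2e n i (ent A) (ent (dualB n B a)) (ent (dualB n B l)) * v $ k * omega n (B ! a *\<^sub>v unit_vec (2*n) k) w"
      by (simp only: 1 2 brgen_GS_GV)
  qed
  finally show ?thesis .
qed

definition bform :: "nat \<Rightarrow> complex mat \<Rightarrow> (nat \<Rightarrow> complex) \<Rightarrow> (nat \<Rightarrow> complex) \<Rightarrow> complex" where
  "bform n B a b = (\<Sum>x<2*n. \<Sum>y<2*n. B $$ (x,y) * a y * eps x * b (pix x))"

lemma alpha_eq: assumes B: "B \<in> carrier_mat (2*n) (2*n)" and w: "ev n w"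
  shows "(\<Sum>k<2*n. v $ k * omega n (B *\<^sub>v unit_vec (2*n) k) w) = bform n B (($) v) (($) w)"
proof -
  have "(\<Sum>k<2*n. v $ k * omega n (B *\<^sub>v unit_vec (2*n) k) w) = (\<Sum>k<2*n. \<Sum>x<2*n. B $$ (x,k) * v $ k * eps x * w $ (pix x))"
  proof (intro sum.cong refl)
    fix k assume "k \<in> {..<2*n}"
    then have k: "k < 2*n" by simp
    show "v $ k * omega n (B *\<^sub>v unit_vec (2*n) k) w = (\<Sum>x<2*n. B $$ (x,k) * v $ k * eps x * w $ (pix x))"
      unfolding omega_Bunit[OF B k w] by (simp add: sum_distrib_left mult_ac)
  qed
  also have "\<dots> = bform n B (($) v) (($) w)" unfolding bform_def by (rule sum.swap)
  finally show ?thesis .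
qed

lemma beta_eq: assumes B: "B \<in> carrier_mat (2*n) (2*n)" and w: "ev n w"
  shows "(\<Sum>j<2*n. omega n (B *\<^sub>v unit_vec (2*n) j) w * omega n (vstar n j) w) = - bform n B (($) w) (($) w)"
proof -
  have "(\<Sum>j<2*n. omega n (B *\<^sub>v unit_vec (2*n) j) w * omega n (vstar n j) w) =
     - (\<Sum>j<2*n. w $ j * omega n (B *\<^sub>v unit_vec (2*n) j) w)"
    using w by (simp add: omega_vstar_left sum_negf[symmetric] mult.commute)
  then show ?thesis using alpha_eq[OF B w, of w] by simp
qed

lemma sum_pi: "(\<Sum>x<2*n. f x) = (\<Sum>x<2*n. f (pix x))"
  by (rule sum.reindex_bij_witness[where i=pix and j=pix]) (auto simp: pi_lt)

lemma bform_sym: assumes B: "B \<in> sp n" shows "bform n B a b = bform n B b a"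
proof -
  have "bform n B b a = (\<Sum>x<2*n. \<Sum>y<2*n. B $$ (pix x,y) * b y * eps (pix x) * a x)"
    unfolding bform_def by (subst sum_pi) simp
  also have "\<dots> = (\<Sum>x<2*n. \<Sum>y<2*n. - (eps y * B $$ (pix y, x)) * b y * a x)"
  proof (intro sum.cong refl)
    fix x y assume "x \<in> {..<2*n}" "y \<in> {..<2*n}"
    then have "eps x * B $$ (pix x, y) = eps y * B $$ (pix y, x)" using sp_cond[OF B] by auto
    then show "B $$ (pix x,y) * b y * eps (pix x) * a x = - (eps y * B $$ (pix y, x)) * b y * a x"
      by (simp add: mult_ac)
  qed
  also have "\<dots> = (\<Sum>x<2*n. \<Sum>y<2*n. - (eps (pix y) * B $$ (y, x)) * b (pix y) * a x)"
    by (rule sum.cong[OF refl], subst sum_pi, simp)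
  also have "\<dots> = (\<Sum>x<2*n. \<Sum>y<2*n. B $$ (y, x) * a x * eps y * b (pix y))"
    by (intro sum.cong refl) (simp add: mult_ac)
  also have "\<dots> = bform n B a b" unfolding bform_def by (rule sum.swap)
  finally show ?thesis by simp
qed

definition Mf :: "(nat \<Rightarrow> complex) \<Rightarrow> (nat \<Rightarrow> complex) \<Rightarrow> nat \<Rightarrow> nat \<Rightarrow> complex" where
  "Mf a b x y = a x * (- eps y * b (pix y)) + b x * (- eps y * a (pix y))"

definition Mm :: "nat \<Rightarrow> complex \<Rightarrow> (nat \<Rightarrow> complex) \<Rightarrow> (nat \<Rightarrow> complex) \<Rightarrow> complex mat" where
  "Mm n c a b = mat (2*n) (2*n) (\<lambda>(x,y). c * Mf a b x y)"

lemma Mm_sp: "Mm n c a b \<in> sp n"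
proof -
  have "eps s * (c * Mf a b (pix s) r) = eps r * (c * Mf a b (pix r) s)" for r s
    unfolding Mf_def by (simp add: algebra_simps)
  then show ?thesis unfolding Mm_def by (subst sp_iff) (auto simp: pi_lt)
qed

lemma tp_Mm: assumes B: "B \<in> sp n"
  shows "tp n B (Mm n c a b) = - 2 * c * bform n B a b"
proof -
  have "tp n B (Mm n c a b) = (\<Sum>x<2*n. \<Sum>y<2*n. B $$ (x,y) * (c * Mf a b y x))"
    unfolding tp_def Mm_def by (intro sum.cong refl) auto
  also have "\<dots> = (\<Sum>x<2*n. \<Sum>y<2*n. (- c) * (B $$ (x,y) * a y * eps x * b (pix x)) + (- c) * (B $$ (x,y) * b y * eps x * a (pix x)))"
    unfolding Mf_def by (intro sum.cong refl) (simp add: algebra_simps)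
  also have "\<dots> = - c * (bform n B a b + bform n B b a)"
    unfolding bform_def by (simp only: sum.distrib sum_distrib_left[symmetric] distrib_left)
  finally show ?thesis using bform_sym[OF B, of a b] by simp
qed

lemma D2e_final: "D2e n i a (Mf v w) (Mf w w) = 0"
proof -
  let ?g = "\<lambda>c. - eps c * w (pix c)"
  let ?h = "\<lambda>c. - eps c * v (pix c)"
  have e1: "Mf v w = (\<lambda>u z. (\<lambda>k c. v k * ?g c) u z + (\<lambda>k c. w k * ?h c) u z)"
    by (rule ext)+ (simp add: Mf_def)
  have e2: "Mf w w = (\<lambda>u z. (\<lambda>m c. w m * ?g c) u z + (\<lambda>m c. w m * ?g c) u z)"
    by (rule ext)+ (simp add: Mf_def)
  show ?thesis
    unfolding e1 e2 D2e_addx D2e_addy D2e_zero1 D2e_zero2 by simp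
qed

theorem lemma7p4:
  fixes n i K :: nat and \<zeta> :: "nat \<Rightarrow> complex" and B :: "complex mat list"
    and v :: "complex vec"
  assumes "1 \<le> i" and "i \<le> n"
    and "is_sp_basis n B"
    and "v \<in> carrier_vec (2*n)"
  shows "H_zero n (\<lambda>A w. \<Sum>j<2*n. \<Sum>l<length B.
            pbr n B \<zeta> K (pd n B (GS l) (Qf n i)) (genV n v) A w
            * genV n (B ! l *\<^sub>v unit_vec (2*n) j) A w
            * genV n (vstar n j) A w)"
  unfolding H_zero_def
proof (intro ballI)
  fix A :: "complex mat" and w :: "complex vec" assume A: "A \<in> sp n" and w: "w \<in> carrier_vec (2*n)"
  note bas = assms(3) and v = assms(4)
  let ?L = "length B"
  let ?D = "dualB n B"
  define \<alpha> where "\<alpha> a = bform n (B!a) (($) v) (($) w)" for a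
  define \<beta> where "\<beta> l = - bform n (B!l) (($) w) (($) w)" for l
  define X1 where "X1 = Mm n (-1/2) (($) v) (($) w)"
  define X2 where "X2 = Mm n (1/2) (($) w) (($) w)"
  have Ac: "A \<in> carrier_mat (2*n) (2*n)" using A by (rule sp_carrier)
  have Bc: "B!a \<in> carrier_mat (2*n) (2*n)" if "a < ?L" for a
    using sp_carrier[OF basis_sp[OF bas that]] .
  have P: "pbr n B \<zeta> K (pd n B (GS l) (Qf n i)) (genV n v) A w =
     (\<Sum>a<?L. D2e n i (ent A) (ent (?D a)) (ent (?D l)) * \<alpha> a)" if l: "l < ?L" for l
  proof -
    have "pbr n B \<zeta> K (pd n B (GS l) (Qf n i)) (genV n v) A w =
      (\<Sum>a<?L. D2e n i (ent A) (ent (?D a)) (ent (?D l)) * (\<Sum>k<2*n. v $ k * omega n (B ! a *\<^sub>v unit_vec (2*n) k) w))"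
      unfolding pbr_expand[OF bas l Ac v w] by (simp add: sum_distrib_left mult.assoc)
    also have "\<dots> = (\<Sum>a<?L. D2e n i (ent A) (ent (?D a)) (ent (?D l)) * \<alpha> a)"
      unfolding \<alpha>_def by (intro sum.cong refl) (simp add: alpha_eq[OF Bc w])
    finally show ?thesis .
  qed
  have "(\<Sum>j<2*n. \<Sum>l<?L. pbr n B \<zeta> K (pd n B (GS l) (Qf n i)) (genV n v) A w
            * genV n (B ! l *\<^sub>v unit_vec (2*n) j) A w * genV n (vstar n j) A w) =
     (\<Sum>j<2*n. \<Sum>l<?L. (\<Sum>a<?L. D2e n i (ent A) (ent (?D a)) (ent (?D l)) * \<alpha> a) *
        (omega n (B ! l *\<^sub>v unit_vec (2*n) j) w * omega n (vstar n j) w))"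
  proof (intro sum.cong refl)
    fix j l assume "l \<in> {..<?L}"
    then have l: "l < ?L" by simp
    have g: "genV n x A w = omega n x w" for x by (simp add: genV_def)
    show "pbr n B \<zeta> K (pd n B (GS l) (Qf n i)) (genV n v) A w
            * genV n (B ! l *\<^sub>v unit_vec (2*n) j) A w * genV n (vstar n j) A w =
     (\<Sum>a<?L. D2e n i (ent A) (ent (?D a)) (ent (?D l)) * \<alpha> a) *
        (omega n (B ! l *\<^sub>v unit_vec (2*n) j) w * omega n (vstar n j) w)"
      by (simp only: P[OF l] g mult.assoc)
  qed
  also have "\<dots> = (\<Sum>l<?L. (\<Sum>a<?L. D2e n i (ent A) (ent (?D a)) (ent (?D l)) * \<alpha> a) *
        (\<Sum>j<2*n. omega n (B ! l *\<^sub>v unit_vec (2*n) j) w * omega n (vstar n j) w))"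
    by (subst sum.swap) (simp add: sum_distrib_left)
  also have "\<dots> = (\<Sum>l<?L. \<beta> l * (\<Sum>a<?L. \<alpha> a * D2e n i (ent A) (ent (?D a)) (ent (?D l))))"
  proof (intro sum.cong refl)
    fix l assume "l \<in> {..<?L}"
    then have l: "l < ?L" by simp
    show "(\<Sum>a<?L. D2e n i (ent A) (ent (?D a)) (ent (?D l)) * \<alpha> a) *
        (\<Sum>j<2*n. omega n (B ! l *\<^sub>v unit_vec (2*n) j) w * omega n (vstar n j) w) =
       \<beta> l * (\<Sum>a<?L. \<alpha> a * D2e n i (ent A) (ent (?D a)) (ent (?D l)))"
      unfolding beta_eq[OF Bc[OF l] w] \<beta>_def by (simp add: mult_ac)
  qed
  also have "\<dots> = (\<Sum>l<?L. \<beta> l * D2e n i (ent A) (\<lambda>u z. \<Sum>a\<in>{..<?L}. \<alpha> a * ent (?D a) u z) (ent (?D l)))"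
    by (simp only: D2e_sumx[OF finite_lessThan])
  also have "\<dots> = D2e n i (ent A) (\<lambda>u z. \<Sum>a\<in>{..<?L}. \<alpha> a * ent (?D a) u z) (\<lambda>u z. \<Sum>l\<in>{..<?L}. \<beta> l * ent (?D l) u z)"
    by (simp only: D2e_sumy[OF finite_lessThan])
  also have "\<dots> = D2e n i (ent A) (\<lambda>u z. (-1/2) * Mf (($) v) (($) w) u z) (\<lambda>u z. (1/2) * Mf (($) w) (($) w) u z)"
  proof (rule D2e_cong)
    show "inr n (ent A) (ent A)" by simp
    show "inr n (\<lambda>u z. \<Sum>a\<in>{..<?L}. \<alpha> a * ent (?D a) u z) (\<lambda>u z. (-1/2) * Mf (($) v) (($) w) u z)"
    proof (intro allI impI)
      fix x y assume x: "x < 2*n" and y: "y < 2*n"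
      have "(\<Sum>a\<in>{..<?L}. \<alpha> a * ent (?D a) x y) = (\<Sum>a<?L. tp n (B!a) X1 * ?D a $$ (x,y))"
        unfolding X1_def \<alpha>_def by (intro sum.cong refl) (simp add: tp_Mm[OF basis_sp[OF bas]])
      also have "\<dots> = X1 $$ (x,y)" unfolding X1_def by (rule reconstruct[OF bas Mm_sp x y])
      finally show "(\<Sum>a\<in>{..<?L}. \<alpha> a * ent (?D a) x y) = (-1/2) * Mf (($) v) (($) w) x y"
        unfolding X1_def Mm_def using x y by simp
    qed
    show "inr n (\<lambda>u z. \<Sum>l\<in>{..<?L}. \<beta> l * ent (?D l) u z) (\<lambda>u z. (1/2) * Mf (($) w) (($) w) u z)"
    proof (intro allI impI)
      fix x y assume x: "x < 2*n" and y: "y < 2*n"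
      have "(\<Sum>l\<in>{..<?L}. \<beta> l * ent (?D l) x y) = (\<Sum>l<?L. tp n (B!l) X2 * ?D l $$ (x,y))"
        unfolding X2_def \<beta>_def by (intro sum.cong refl) (simp add: tp_Mm[OF basis_sp[OF bas]])
      also have "\<dots> = X2 $$ (x,y)" unfolding X2_def by (rule reconstruct[OF bas Mm_sp x y])
      finally show "(\<Sum>l\<in>{..<?L}. \<beta> l * ent (?D l) x y) = (1/2) * Mf (($) w) (($) w) x y"
        unfolding X2_def Mm_def using x y by simp
    qed
  qed
  also have "\<dots> = (-1/2) * ((1/2) * D2e n i (ent A) (Mf (($) v) (($) w)) (Mf (($) w) (($) w)))"
    by (simp only: D2e_smx D2e_smy)
  also have "\<dots> = 0" by (simp add: D2e_final)
  finally show "(\<Sum>j<2*n. \<Sum>l<?L. pbr n B \<zeta> K (pd n B (GS l) (Qf n i)) (genV n v) A w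
            * genV n (B ! l *\<^sub>v unit_vec (2*n) j) A w * genV n (vstar n j) A w) = 0" .
qed

end
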